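(* Let $X$ be a spectrally extremal regular graph on $n$ vertices of diameter $d$, with distinct eigenvalues $\theta_0 > \dots > \theta_d$. If the eccentricity of every vertex is $d$ and \[ n \prod_{s=1}^{d} \frac{1}{\theta_0 - \theta_s} = \sum_{r=0}^{d} (-1)^r \prod_{s \neq r} \frac{1}{\theta_r - \theta_s}, \] then $X$ is an antipodal distance-regular graph.
   Context: $X$ is a finite simple connected graph. A graph of diameter $d$ has at least $d+1$ distinct adjacency eigenvalues; it is spectrally extremal if it has exactly $d+1$. The eccentricity of a vertex $u$ is $\max_w d(u,w)$. A partition of $V(X)$ is equitable if the number of neighbours that a vertex $x$ has in a class $C$ depends only on the class containing $x$; these numbers are the parameters of the partition. The distance partition of $u$ is the partition into the sets $\{w : d(u,w)=i\}$. $X$ is distance-regular if the distance partition of every vertex is equitable with parameters independent of the vertex. A distance-regular graph of diameter $d$ is antipodal if the relation "being at distance $0$ or $d$" is an equivalence relation on $V(X)$. *)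

theory Defs
  imports Complex_Main
begin

definition simple_graph :: "'a set \<Rightarrow> ('a \<Rightarrow> 'a \<Rightarrow> bool) \<Rightarrow> bool" where
  "simple_graph V E \<longleftrightarrow> finite V \<and> V \<noteq> {} \<and>
     (\<forall>x y. E x y \<longrightarrow> x \<in> V \<and> y \<in> V) \<and>
     (\<forall>x y. E x y \<longrightarrow> E y x) \<and> (\<forall>x. \<not> E x x)"

definition edge_rel :: "'a set \<Rightarrow> ('a \<Rightarrow> 'a \<Rightarrow> bool) \<Rightarrow> ('a \<times> 'a) set" where
  "edge_rel V E = {(x, y). x \<in> V \<and> y \<in> V \<and> E x y}"

definition connected_graph :: "'a set \<Rightarrow> ('a \<Rightarrow> 'a \<Rightarrow> bool) \<Rightarrow> bool" where
  "connected_graph V E \<longleftrightarrow> (\<forall>u\<in>V. \<forall>w\<in>V. (u, w) \<in> (edge_rel V E)\<^sup>*)"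

definition gdist :: "'a set \<Rightarrow> ('a \<Rightarrow> 'a \<Rightarrow> bool) \<Rightarrow> 'a \<Rightarrow> 'a \<Rightarrow> nat" where
  "gdist V E u w = (LEAST n. (u, w) \<in> (edge_rel V E) ^^ n)"

definition eccentricity :: "'a set \<Rightarrow> ('a \<Rightarrow> 'a \<Rightarrow> bool) \<Rightarrow> 'a \<Rightarrow> nat" where
  "eccentricity V E u = Max {gdist V E u w | w. w \<in> V}"

definition diameter :: "'a set \<Rightarrow> ('a \<Rightarrow> 'a \<Rightarrow> bool) \<Rightarrow> nat" where
  "diameter V E = Max {gdist V E u w | u w. u \<in> V \<and> w \<in> V}"

definition regular_graph :: "'a set \<Rightarrow> ('a \<Rightarrow> 'a \<Rightarrow> bool) \<Rightarrow> bool" where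
  "regular_graph V E \<longleftrightarrow> (\<exists>k. \<forall>x\<in>V. card {y \<in> V. E x y} = k)"

text \<open>Adjacency eigenvalues: \<theta> with A f = \<theta> f for some nonzero f : V \<rightarrow> \<real>.
  (The adjacency matrix is real symmetric, so all eigenvalues are real.)\<close>
definition adj_eigenvalues :: "'a set \<Rightarrow> ('a \<Rightarrow> 'a \<Rightarrow> bool) \<Rightarrow> real set" where
  "adj_eigenvalues V E = {\<theta>. \<exists>f :: 'a \<Rightarrow> real. (\<exists>x\<in>V. f x \<noteq> 0) \<and>
       (\<forall>x\<in>V. (\<Sum>y\<in>{y \<in> V. E x y}. f y) = \<theta> * f x)}"

definition spectrally_extremal :: "'a set \<Rightarrow> ('a \<Rightarrow> 'a \<Rightarrow> bool) \<Rightarrow> bool" where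
  "spectrally_extremal V E \<longleftrightarrow> card (adj_eigenvalues V E) = diameter V E + 1"

definition distance_regular :: "'a set \<Rightarrow> ('a \<Rightarrow> 'a \<Rightarrow> bool) \<Rightarrow> bool" where
  "distance_regular V E \<longleftrightarrow> (\<exists>p :: nat \<Rightarrow> nat \<Rightarrow> nat. \<forall>u\<in>V. \<forall>x\<in>V. \<forall>j.
      card {y \<in> V. E x y \<and> gdist V E u y = j} = p (gdist V E u x) j)"

definition antipodal_drg :: "'a set \<Rightarrow> ('a \<Rightarrow> 'a \<Rightarrow> bool) \<Rightarrow> bool" where
  "antipodal_drg V E \<longleftrightarrow> distance_regular V E \<and>
     equiv V {(x, y). x \<in> V \<and> y \<in> V \<and>
                      (gdist V E x y = 0 \<or> gdist V E x y = diameter V E)}"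

end

theory Submission
  imports Defs "HOL-Computational_Algebra.Fundamental_Theorem_Algebra" "HOL-Library.Function_Algebras"
begin


definition evc :: "real poly \<Rightarrow> complex \<Rightarrow> complex" where
  "evc p z = poly (map_poly complex_of_real p) z"

lemma evc_pCons: "evc (pCons a p) z = of_real a + z * evc p z"
  by (simp add: evc_def map_poly_pCons)

lemma evc_0[simp]: "evc 0 z = 0" by (simp add: evc_def)

lemma evc_add: "evc (p + q) z = evc p z + evc q z"
proof -
  have "map_poly complex_of_real (p + q) = map_poly complex_of_real p + map_poly complex_of_real q"
    by (intro poly_eqI) (simp add: coeff_map_poly)
  then show ?thesis by (simp add: evc_def)
qed

lemma evc_smult: "evc (smult c p) z = of_real c * evc p z"
  by (simp add: evc_def map_poly_smult)

lemma evc_mult: "evc (p * q) z = evc p z * evc q z"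
proof (induction p)
  case 0 then show ?case by (simp add: evc_def)
next
  case (pCons a p)
  have "pCons a p * q = smult a q + pCons 0 (p * q)" by simp
  then show ?case using pCons.IH by (simp add: evc_add evc_smult evc_pCons algebra_simps)
qed

lemma evc_real: "evc p (of_real x) = of_real (poly p x)"
  by (induction p) (simp_all add: evc_pCons)

lemma evc_cnj: "evc p (cnj z) = cnj (evc p z)"
  by (induction p) (simp_all add: evc_pCons)

lemma real_factor:
  fixes p :: "real poly"
  assumes "degree p > 0"
  shows "(\<exists>a p'. p = [:-a, 1:] * p') \<or> (\<exists>a b p'. b \<noteq> 0 \<and> p = [:a^2 + b^2, -2*a, 1:] * p')"
proof -
  have "degree (map_poly complex_of_real p) = degree p" by (simp add: degree_map_poly)
  then have "\<not> (\<exists>a l. a \<noteq> 0 \<and> l = 0 \<and> map_poly complex_of_real p = pCons a l)"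
    using assms by auto
  then obtain z where z: "evc p z = 0" unfolding evc_def using fundamental_theorem_of_algebra_alt by blast
  show ?thesis
  proof (cases "Im z = 0")
    case True
    then have "z = of_real (Re z)" by (simp add: complex_eq_iff)
    then have "poly p (Re z) = 0" using z evc_real[of p "Re z"] by simp
    then have "[:- Re z, 1:] dvd p" by (simp add: poly_eq_0_iff_dvd)
    then obtain p' where "p = [:- Re z, 1:] * p'" by (elim dvdE)
    then show ?thesis by blast
  next
    case False
    define a where "a = Re z"
    define b where "b = Im z"
    define Q where "Q = [:a^2 + b^2, -2*a, 1:]"
    have b: "b \<noteq> 0" using False b_def by simp
    have Qz: "evc Q z = 0"
    proof -
      have "evc Q z = of_real (a^2 + b^2) + z * (of_real (-2*a) + z)"
        unfolding Q_def by (simp add: evc_pCons)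
      also have "\<dots> = 0"
        by (simp add: a_def b_def complex_eq_iff power2_eq_square algebra_simps)
      finally show ?thesis .
    qed
    have Qz': "evc Q (cnj z) = 0" using Qz evc_cnj[of Q z] by simp
    have z': "evc p (cnj z) = 0" using z evc_cnj[of p z] by simp
    have Q0: "Q \<noteq> 0" unfolding Q_def by simp
    have dQ: "degree Q = 2" unfolding Q_def by simp
    define r where "r = p mod Q"
    have pr: "p = (p div Q) * Q + r" unfolding r_def by simp
    have rz: "evc r z = 0" using z Qz pr by (metis add_0 evc_add evc_mult mult_zero_right)
    have rz': "evc r (cnj z) = 0" using z' Qz' pr by (metis add_0 evc_add evc_mult mult_zero_right)
    have dr: "degree r \<le> 1" using degree_mod_less[OF Q0, of p] dQ unfolding r_def by auto
    obtain r0 r1 where r01: "r = [:r0, r1:]"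
    proof -
      have "r = [:coeff r 0, coeff r 1:]"
        using dr by (intro poly_eqI) (auto simp: coeff_pCons coeff_eq_0 split: nat.splits)
      then show ?thesis using that by blast
    qed
    have e1: "of_real r0 + z * of_real r1 = 0" using rz unfolding r01 by (simp add: evc_pCons)
    have "r1 = 0"
    proof -
      have "Im (of_real r0 + z * of_real r1) = 0" using e1 by simp
      then have "b * r1 = 0" by (simp add: b_def)
      then show ?thesis using b by simp
    qed
    then have "r0 = 0" using e1 by simp
    then have "r = 0" using r01 \<open>r1 = 0\<close> by simp
    then have "p = Q * (p div Q)" using pr by (simp add: mult.commute)
    then show ?thesis using b unfolding Q_def by blast
  qed
qed


lemma fin_argmax:
  fixes g :: "'a \<Rightarrow> real"
  assumes "finite S" "S \<noteq> {}" shows "\<exists>x\<in>S. \<forall>y\<in>S. g y \<le> g x"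
proof -
  have "Max (g ` S) \<in> g ` S" using assms by (intro Max_in) auto
  then obtain x where "x \<in> S" "g x = Max (g ` S)" by auto
  moreover have "\<forall>y\<in>S. g y \<le> Max (g ` S)" using assms by auto
  ultimately show ?thesis by metis
qed

locale grph =
  fixes V :: "'a set" and E :: "'a \<Rightarrow> 'a \<Rightarrow> bool"
  assumes sg: "simple_graph V E"
begin

lemma finV: "finite V" using sg by (simp add: simple_graph_def)
lemma EV: "E x y \<Longrightarrow> x \<in> V \<and> y \<in> V" using sg by (simp add: simple_graph_def)
lemma Esym: "E x y \<Longrightarrow> E y x" using sg by (simp add: simple_graph_def)

definition Nb :: "'a \<Rightarrow> 'a set" where "Nb x = {y\<in>V. E x y}"
lemma finNb[simp]: "finite (Nb x)" using finV by (simp add: Nb_def)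
lemma Nb_out: "x \<notin> V \<Longrightarrow> Nb x = {}" using EV by (auto simp: Nb_def)

definition Aop :: "('a \<Rightarrow> real) \<Rightarrow> ('a \<Rightarrow> real)" where
  "Aop f = (\<lambda>x. \<Sum>y\<in>Nb x. f y)"

definition ev :: "real poly \<Rightarrow> ('a \<Rightarrow> real) \<Rightarrow> ('a \<Rightarrow> real)" where
  "ev p f = (\<lambda>x. \<Sum>k\<le>degree p. coeff p k * (Aop ^^ k) f x)"

lemma Aop_sum: "Aop (\<lambda>x. \<Sum>k\<in>K. c k * g k x) y = (\<Sum>k\<in>K. c k * Aop (g k) y)"
  by (simp add: Aop_def sum_distrib_left sum.swap[of _ "Nb y"])

lemma ev_upto: "degree p \<le> N \<Longrightarrow> ev p f x = (\<Sum>k\<le>N. coeff p k * (Aop ^^ k) f x)"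
  unfolding ev_def
  by (rule sum.mono_neutral_left) (auto simp: coeff_eq_0)

lemma ev_pCons: "ev (pCons a p) f x = a * f x + Aop (ev p f) x"
proof -
  have "ev (pCons a p) f x = (\<Sum>k\<le>Suc (degree p). coeff (pCons a p) k * (Aop ^^ k) f x)"
    by (rule ev_upto) (simp add: degree_pCons_le)
  also have "\<dots> = a * f x + (\<Sum>k\<le>degree p. coeff p k * (Aop ^^ Suc k) f x)"
    by (subst sum.atMost_Suc_shift) simp
  also have "(\<Sum>k\<le>degree p. coeff p k * (Aop ^^ Suc k) f x) = Aop (ev p f) x"
    unfolding ev_def by (subst Aop_sum) simp
  finally show ?thesis .
qed

lemma ev_0[simp]: "ev 0 f = (\<lambda>x. 0)" by (simp add: ev_def)

lemma Aop_add[simp]: "Aop (\<lambda>x. f x + g x) = (\<lambda>x. Aop f x + Aop g x)"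
  by (simp add: Aop_def fun_eq_iff sum.distrib)
lemma Aop_scale[simp]: "Aop (\<lambda>x. c * f x) = (\<lambda>x. c * Aop f x)"
  by (simp add: Aop_def fun_eq_iff sum_distrib_left)
lemma Aop_zero[simp]: "Aop (\<lambda>x. 0) = (\<lambda>x. 0)" by (simp add: Aop_def fun_eq_iff)
lemma Aop_diff[simp]: "Aop (\<lambda>x. f x - g x) = (\<lambda>x. Aop f x - Aop g x)"
  by (simp add: Aop_def fun_eq_iff sum_subtractf)
lemma Aop_uminus[simp]: "Aop (\<lambda>x. - f x) = (\<lambda>x. - Aop f x)"
  by (simp add: Aop_def fun_eq_iff sum_negf)

lemma ev_pCons': "ev (pCons a p) f = (\<lambda>x. a * f x + Aop (ev p f) x)"
  by (simp add: fun_eq_iff ev_pCons)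

lemma ev_add_fun: "ev p (\<lambda>x. f x + g x) = (\<lambda>x. ev p f x + ev p g x)"
  by (induction p) (simp_all add: ev_pCons' algebra_simps)

lemma ev_scale_fun: "ev p (\<lambda>x. c * f x) = (\<lambda>x. c * ev p f x)"
  by (induction p) (simp_all add: ev_pCons' algebra_simps)

lemma ev_zero_fun[simp]: "ev p (\<lambda>x. 0) = (\<lambda>x. 0)"
  by (induction p) (simp_all add: ev_pCons')

lemma ev_diff_fun: "ev p (\<lambda>x. f x - g x) = (\<lambda>x. ev p f x - ev p g x)"
  by (induction p) (simp_all add: ev_pCons' algebra_simps)

lemma ev_add: "ev (p + q) f = (\<lambda>x. ev p f x + ev q f x)"
proof (induction p arbitrary: q)
  case 0 then show ?case by simp
next
  case (pCons a p)
  show ?case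
  proof (cases q rule: pCons_cases)
    case (pCons b q')
    show ?thesis using pCons.IH[of q'] 
      by (simp add: pCons ev_pCons' algebra_simps)
  qed
qed

lemma ev_smult: "ev (smult c p) f = (\<lambda>x. c * ev p f x)"
  by (induction p) (simp_all add: ev_pCons' algebra_simps)

lemma ev_minus: "ev (- p) f = (\<lambda>x. - ev p f x)"
  using ev_smult[of "-1" p f] by simp

lemma ev_diff: "ev (p - q) f = (\<lambda>x. ev p f x - ev q f x)"
  using ev_add[of p "-q" f] ev_minus[of q f] by simp

lemma ev_const: "ev [:c:] f = (\<lambda>x. c * f x)"
  by (simp add: ev_pCons')

lemma ev_one[simp]: "ev 1 f = f"
  by (simp add: one_pCons ev_const)

lemma ev_mult: "ev (p * q) f = ev p (ev q f)"
proof (induction p)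
  case 0 then show ?case by simp
next
  case (pCons a p)
  have "pCons a p * q = smult a q + pCons 0 (p * q)" by simp
  then show ?case using pCons.IH
    by (simp add: ev_add ev_smult ev_pCons')
qed

lemma ev_comm: "ev p (ev q f) = ev q (ev p f)"
  by (metis ev_mult mult.commute)


definition ip :: "('a \<Rightarrow> real) \<Rightarrow> ('a \<Rightarrow> real) \<Rightarrow> real" where
  "ip f g = (\<Sum>x\<in>V. f x * g x)"

lemma Nb_sum: "(\<Sum>y\<in>Nb x. f y) = (\<Sum>y\<in>V. if E x y then f y else 0)"
  unfolding Nb_def using finV by (simp add: sum.inter_filter)

lemma ip_Aop: "ip (Aop f) g = ip f (Aop g)"
proof -
  have "ip (Aop f) g = (\<Sum>x\<in>V. \<Sum>y\<in>V. (if E x y then f y else 0) * g x)"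
    unfolding ip_def Aop_def Nb_sum by (simp add: sum_distrib_right)
  also have "\<dots> = (\<Sum>x\<in>V. \<Sum>y\<in>V. if E x y then f y * g x else 0)"
    by (intro sum.cong) auto
  also have "\<dots> = (\<Sum>y\<in>V. \<Sum>x\<in>V. if E x y then f y * g x else 0)"
    by (rule sum.swap)
  also have "\<dots> = (\<Sum>y\<in>V. f y * (\<Sum>x\<in>V. if E y x then g x else 0))"
    unfolding sum_distrib_left
  proof (intro sum.cong refl)
    fix y x show "(if E x y then f y * g x else 0) = f y * (if E y x then g x else 0)"
      using Esym[of x y] Esym[of y x] by auto
  qed
  also have "\<dots> = ip f (Aop g)"
    unfolding ip_def Aop_def Nb_sum ..
  finally show ?thesis .
qed

lemma ip_lin: "ip (\<lambda>x. a * f x + h x) g = a * ip f g + ip h g"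
  by (simp add: ip_def algebra_simps sum.distrib sum_distrib_left)
lemma ip_lin2: "ip g (\<lambda>x. a * f x + h x) = a * ip g f + ip g h"
  by (simp add: ip_def algebra_simps sum.distrib sum_distrib_left)

lemma ev_X: "ev [:0,1:] f = Aop f"
  by (simp add: ev_pCons' ev_const)

lemma ev_Aop: "ev p (Aop g) = Aop (ev p g)"
  using ev_comm[of p "[:0,1:]" g] by (simp add: ev_X)

lemma ip_ev: "ip (ev p f) g = ip f (ev p g)"
proof (induction p arbitrary: g)
  case 0 then show ?case by (simp add: ip_def)
next
  case (pCons a p)
  show ?case
    by (simp add: ev_pCons' ip_lin ip_lin2 ip_Aop pCons.IH ev_Aop)
qed

definition dl :: "'a \<Rightarrow> 'a \<Rightarrow> real" where "dl y = (\<lambda>x. if x = y then 1 else 0)"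

lemma ip_dl: "y \<in> V \<Longrightarrow> ip h (dl y) = h y"
proof -
  assume y: "y \<in> V"
  have "ip h (dl y) = (\<Sum>x\<in>V. if x = y then h x else 0)"
    unfolding ip_def dl_def by (intro sum.cong) auto
  also have "\<dots> = h y" using sum.delta[OF finV, of y h] y by simp
  finally show ?thesis .
qed

lemma ip_comm: "ip f g = ip g f" by (simp add: ip_def mult.commute)

lemma ev_sym: "x \<in> V \<Longrightarrow> y \<in> V \<Longrightarrow> ev p (dl y) x = ev p (dl x) y"
proof -
  assume x: "x \<in> V" and y: "y \<in> V"
  have "ev p (dl y) x = ip (ev p (dl y)) (dl x)" using ip_dl[OF x] by simp
  also have "\<dots> = ip (dl y) (ev p (dl x))" by (rule ip_ev)
  also have "\<dots> = ev p (dl x) y" using ip_dl[OF y, of "ev p (dl x)"] ip_comm[of "dl y"] by simp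
  finally show ?thesis .
qed

lemma ev_expand: "x \<in> V \<Longrightarrow> ev p f x = (\<Sum>y\<in>V. ev p (dl y) x * f y)"
proof (induction p arbitrary: x)
  case 0 then show ?case by simp
next
  case (pCons a p)
  have NV: "Nb x \<subseteq> V" by (auto simp: Nb_def)
  have "ev (pCons a p) f x = a * f x + (\<Sum>z\<in>Nb x. \<Sum>y\<in>V. ev p (dl y) z * f y)"
    using pCons.IH NV by (simp add: ev_pCons Aop_def subset_eq)
  also have "\<dots> = (\<Sum>y\<in>V. a * dl y x * f y) + (\<Sum>y\<in>V. (\<Sum>z\<in>Nb x. ev p (dl y) z) * f y)"
  proof -
    have "(\<Sum>y\<in>V. a * dl y x * f y) = (\<Sum>y\<in>V. if y = x then a * f y else 0)"
      by (intro sum.cong) (auto simp: dl_def)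
    also have "\<dots> = a * f x" using finV pCons.prems by simp
    finally have 1: "(\<Sum>y\<in>V. a * dl y x * f y) = a * f x" .
    have 2: "(\<Sum>z\<in>Nb x. \<Sum>y\<in>V. ev p (dl y) z * f y) = (\<Sum>y\<in>V. (\<Sum>z\<in>Nb x. ev p (dl y) z) * f y)"
      by (simp add: sum.swap[of _ "Nb x"] sum_distrib_right)
    show ?thesis using 1 2 by simp
  qed
  also have "\<dots> = (\<Sum>y\<in>V. ev (pCons a p) (dl y) x * f y)"
    by (simp add: ev_pCons Aop_def sum.distrib[symmetric] algebra_simps)
  finally show ?case .
qed

definition R :: "('a \<times> 'a) set" where "R = edge_rel V E"

lemma R_iff: "(x, y) \<in> R \<longleftrightarrow> E x y"
  using EV by (auto simp: R_def edge_rel_def)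

abbreviation W :: "nat \<Rightarrow> 'a \<Rightarrow> 'a \<Rightarrow> real" where "W k y x \<equiv> (Aop ^^ k) (dl y) x"

lemma W_nonneg: "W k y x \<ge> 0"
  by (induction k arbitrary: x) (auto simp: dl_def Aop_def intro!: sum_nonneg)

lemma W_pos_iff: "W k y x > 0 \<longleftrightarrow> (x, y) \<in> R ^^ k"
proof (induction k arbitrary: x)
  case 0 then show ?case by (auto simp: dl_def)
next
  case (Suc k)
  have "W (Suc k) y x > 0 \<longleftrightarrow> (\<exists>z\<in>Nb x. W k y z > 0)"
  proof -
    have "W (Suc k) y x = (\<Sum>z\<in>Nb x. W k y z)" by (simp add: Aop_def)
    moreover have "(\<Sum>z\<in>Nb x. W k y z) = 0 \<longleftrightarrow> (\<forall>z\<in>Nb x. W k y z = 0)"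
      by (rule sum_nonneg_eq_0_iff) (auto intro: W_nonneg)
    moreover have "(\<Sum>z\<in>Nb x. W k y z) \<ge> 0" by (auto intro: sum_nonneg W_nonneg)
    moreover have "(\<exists>z\<in>Nb x. W k y z > 0) \<longleftrightarrow> \<not> (\<forall>z\<in>Nb x. W k y z = 0)"
      using W_nonneg[of k y] by (auto simp: less_le)
    ultimately show ?thesis by linarith
  qed
  also have "\<dots> \<longleftrightarrow> (x, y) \<in> R ^^ Suc k"
  proof
    assume "\<exists>z\<in>Nb x. W k y z > 0"
    then obtain z where "E x z" "(z, y) \<in> R ^^ k" using Suc.IH by (auto simp: Nb_def)
    then show "(x, y) \<in> R ^^ Suc k" by (meson R_iff relpow_Suc_I2)
  next
    assume "(x, y) \<in> R ^^ Suc k"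
    then obtain z where "(x, z) \<in> R" "(z, y) \<in> R ^^ k" by (meson relpow_Suc_E2)
    then show "\<exists>z\<in>Nb x. W k y z > 0" using Suc.IH EV by (auto simp: Nb_def R_iff)
  qed
  finally show ?case .
qed


lemma ev_monom1: "ev (monom 1 j) f x = (Aop ^^ j) f x"
proof -
  have "ev (monom 1 j) f x = (\<Sum>k\<le>j. coeff (monom 1 j) k * (Aop ^^ k) f x)"
    by (rule ev_upto) (simp add: degree_monom_le)
  also have "\<dots> = (\<Sum>k\<le>j. if k = j then (Aop ^^ k) f x else 0)"
    by (intro sum.cong) (auto simp: coeff_monom)
  finally show ?thesis by simp
qed

lemma W_sym: "x \<in> V \<Longrightarrow> y \<in> V \<Longrightarrow> W j y x = W j x y"
  using ev_sym[of x y "monom 1 j"] by (simp add: ev_monom1)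

lemma relpow_V: "(u, x) \<in> R ^^ j \<Longrightarrow> u \<in> V \<Longrightarrow> x \<in> V"
proof (induction j arbitrary: x)
  case 0 then show ?case by auto
next
  case (Suc j)
  then obtain y where "(u, y) \<in> R ^^ j" "(y, x) \<in> R" by (meson relpow_Suc_E)
  then show ?case using EV R_iff by blast
qed

lemma relpow_sym: "(x, y) \<in> R ^^ j \<Longrightarrow> x \<in> V \<Longrightarrow> (y, x) \<in> R ^^ j"
proof -
  assume a: "(x, y) \<in> R ^^ j" and x: "x \<in> V"
  have y: "y \<in> V" using relpow_V[OF a x] .
  have "W j y x > 0" using a W_pos_iff by blast
  then have "W j x y > 0" using W_sym[OF x y] by simp
  then show ?thesis using W_pos_iff by blast
qed

end

locale cgrph = grph +
  assumes conn: "connected_graph V E"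
begin

abbreviation gd where "gd \<equiv> gdist V E"

lemma gd_walk: "x \<in> V \<Longrightarrow> y \<in> V \<Longrightarrow> (x, y) \<in> R ^^ gd x y"
proof -
  assume "x \<in> V" "y \<in> V"
  then have "(x, y) \<in> R\<^sup>*" using conn by (simp add: connected_graph_def R_def)
  then obtain j where "(x, y) \<in> R ^^ j" using rtrancl_power by blast
  then show ?thesis unfolding gdist_def R_def[symmetric] by (rule LeastI)
qed

lemma gd_le: "(x, y) \<in> R ^^ j \<Longrightarrow> gd x y \<le> j"
  unfolding gdist_def R_def[symmetric] by (rule Least_le)

lemma W_zero: "j < gd x y \<Longrightarrow> W j y x = 0"
  using W_pos_iff[of j y x] W_nonneg[of j y x] gd_le[of x y j] by linarith

lemma W_gd_pos: "x \<in> V \<Longrightarrow> y \<in> V \<Longrightarrow> W (gd x y) y x > 0"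
  using W_pos_iff gd_walk by blast

lemma gd_sym: "x \<in> V \<Longrightarrow> y \<in> V \<Longrightarrow> gd x y = gd y x"
  using gd_walk gd_le relpow_sym by (meson antisym)

lemma gd_self[simp]: "gd x x = 0"
  using gd_le[of x x 0] by simp

lemma gd_zero_iff: "x \<in> V \<Longrightarrow> y \<in> V \<Longrightarrow> gd x y = 0 \<longleftrightarrow> x = y"
  using gd_walk[of x y] by auto

lemma gd_tri: "x \<in> V \<Longrightarrow> y \<in> V \<Longrightarrow> z \<in> V \<Longrightarrow> gd x z \<le> gd x y + gd y z"
proof -
  assume V: "x \<in> V" "y \<in> V" "z \<in> V"
  have "(x, z) \<in> R ^^ gd x y O R ^^ gd y z" using gd_walk V by blast
  then show ?thesis by (metis gd_le relpow_add)
qed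

lemma gd_edge: "E x z \<Longrightarrow> gd x z \<le> 1"
  using gd_le[of x z 1] R_iff by simp


end

locale setting = cgrph +
  fixes n d :: nat and \<theta> :: "nat \<Rightarrow> real" and kk :: nat
  assumes regk: "\<And>x. x \<in> V \<Longrightarrow> card (Nb x) = kk"
  and diam: "diameter V E = d"
  and mono: "\<And>i j. i < j \<Longrightarrow> j \<le> d \<Longrightarrow> \<theta> j < \<theta> i"
  and eig: "adj_eigenvalues V E = \<theta> ` {0..d}"
  and ecc: "\<forall>u\<in>V. eccentricity V E u = d"
  and cardV: "card V = n"
  and cond: "real n * (\<Prod>s\<in>{1..d}. 1 / (\<theta> 0 - \<theta> s)) =
         (\<Sum>r\<in>{0..d}. (-1) ^ r * (\<Prod>s\<in>{0..d} - {r}. 1 / (\<theta> r - \<theta> s)))"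
begin

lemma Vne: "V \<noteq> {}" using sg by (simp add: simple_graph_def)

lemma gdset_eq: "{gdist V E u w | u w. u \<in> V \<and> w \<in> V} = (\<lambda>(u, w). gd u w) ` (V \<times> V)"
  by auto

lemma gd_le_d: "x \<in> V \<Longrightarrow> y \<in> V \<Longrightarrow> gd x y \<le> d"
  unfolding diam[symmetric] diameter_def gdset_eq
  by (rule Max_ge) (use finV in auto)

lemma diam_pair: "\<exists>u\<in>V. \<exists>v\<in>V. gd u v = d"
proof -
  have "Max ((\<lambda>(u, w). gd u w) ` (V \<times> V)) \<in> (\<lambda>(u, w). gd u w) ` (V \<times> V)"
    by (rule Max_in) (use finV Vne in auto)
  then obtain u v where "u \<in> V" "v \<in> V" "Max ((\<lambda>(u, w). gd u w) ` (V \<times> V)) = gd u v"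
    by auto
  then show ?thesis using diam unfolding diameter_def gdset_eq by metis
qed

lemma ecc_ex: "u \<in> V \<Longrightarrow> \<exists>v\<in>V. gd u v = d"
proof -
  assume u: "u \<in> V"
  have e: "{gdist V E u w | w. w \<in> V} = gd u ` V" by auto
  have "Max (gd u ` V) \<in> gd u ` V"
    by (rule Max_in) (use finV Vne in auto)
  moreover have "Max (gd u ` V) = d"
  proof -
    have "eccentricity V E u = d" using ecc u by blast
    then show ?thesis unfolding eccentricity_def e .
  qed
  ultimately show ?thesis by (metis imageE)
qed

lemma split_walk: "(u, v) \<in> R ^^ (a + b) \<Longrightarrow> \<exists>x. (u, x) \<in> R ^^ a \<and> (x, v) \<in> R ^^ b"
  by (auto simp: relpow_add)

lemma geodesic: "1 \<le> i \<Longrightarrow> i \<le> d \<Longrightarrow>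
   \<exists>u\<in>V. \<exists>x\<in>V. \<exists>z\<in>V. gd x u = i - 1 \<and> E x z \<and> gd z u = i"
proof -
  assume i: "1 \<le> i" "i \<le> d"
  obtain u v where uv: "u \<in> V" "v \<in> V" "gd u v = d" using diam_pair by blast
  have "(u, v) \<in> R ^^ ((i - 1) + Suc (d - i))" using gd_walk[OF uv(1,2)] uv(3) i by simp
  then obtain x where x: "(u, x) \<in> R ^^ (i - 1)" "(x, v) \<in> R ^^ Suc (d - i)"
    using split_walk by blast
  then obtain z where z: "(x, z) \<in> R" "(z, v) \<in> R ^^ (d - i)" by (meson relpow_Suc_E2)
  have xV: "x \<in> V" using relpow_V x(1) uv(1) by blast
  have zV: "z \<in> V" using z(1) EV R_iff by blast
  have Exz: "E x z" using z(1) R_iff by blast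
  have 1: "gd u x \<le> i - 1" using gd_le x(1) by blast
  have 2: "gd z v \<le> d - i" using gd_le z(2) by blast
  have 3: "gd u v \<le> gd u z + gd z v" using gd_tri uv zV by blast
  have 4: "gd u z \<le> gd u x + gd x z" using gd_tri uv xV zV by blast
  have 5: "gd x z \<le> 1" using gd_edge Exz by blast
  have 6: "gd u x \<le> gd u z + gd z x" using gd_tri uv xV zV by blast
  have 7: "gd z x \<le> 1" using gd_edge Esym Exz by blast
  have "gd u z = i" using 1 2 3 4 5 uv(3) i by linarith
  moreover have "gd u x = i - 1" using 1 2 3 4 5 6 7 uv(3) i by linarith
  ultimately show ?thesis using gd_sym uv xV zV Exz by metis
qed

lemma dist_ex: "j \<le> d \<Longrightarrow> \<exists>x\<in>V. \<exists>y\<in>V. gd x y = j"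
proof (cases j)
  case 0 then show ?thesis using Vne gd_self by (metis all_not_in_conv)
next
  case (Suc j')
  assume "j \<le> d"
  then obtain u x z where "u \<in> V" "z \<in> V" "gd z u = j" using geodesic[of j] Suc by auto
  then show ?thesis by blast
qed


lemma ev_at: "\<forall>j > gd x y. coeff p j = 0 \<Longrightarrow> ev p (dl y) x = coeff p (gd x y) * W (gd x y) y x"
proof -
  assume c: "\<forall>j > gd x y. coeff p j = 0"
  have "ev p (dl y) x = (\<Sum>j\<le>degree p + gd x y. coeff p j * W j y x)"
    by (rule ev_upto) simp
  also have "\<dots> = (\<Sum>j\<le>degree p + gd x y. if j = gd x y then coeff p (gd x y) * W (gd x y) y x else 0)"
  proof (intro sum.cong refl)
    fix j assume "j \<in> {..degree p + gd x y}"
    show "coeff p j * W j y x = (if j = gd x y then coeff p (gd x y) * W (gd x y) y x else 0)"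
      using c W_zero[of j x y] by (cases "j < gd x y") (auto simp: not_less)
  qed
  finally show ?thesis by simp
qed

lemma ev_far: "\<forall>j \<ge> gd x y. coeff p j = 0 \<Longrightarrow> ev p (dl y) x = 0"
  using ev_at[of x y p] by simp

lemma eig_iff: "t \<in> adj_eigenvalues V E \<longleftrightarrow> (\<exists>f. (\<exists>x\<in>V. f x \<noteq> 0) \<and> (\<forall>x\<in>V. Aop f x = t * f x))"
  unfolding adj_eigenvalues_def Aop_def Nb_def by simp

lemma ev_eig: "\<forall>x\<in>V. Aop f x = t * f x \<Longrightarrow> x \<in> V \<Longrightarrow> ev p f x = poly p t * f x"
proof (induction p arbitrary: x)
  case 0 then show ?case by simp
next
  case (pCons a p)
  have NV: "Nb x \<subseteq> V" by (auto simp: Nb_def)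
  have "Aop (ev p f) x = (\<Sum>z\<in>Nb x. poly p t * f z)"
    unfolding Aop_def using pCons NV by (intro sum.cong) auto
  also have "\<dots> = poly p t * Aop f x" by (simp add: Aop_def sum_distrib_left)
  also have "\<dots> = poly p t * t * f x" using pCons.prems by simp
  finally show ?case by (simp add: ev_pCons algebra_simps)
qed

lemma kk_eig: "real kk \<in> adj_eigenvalues V E"
  unfolding eig_iff
proof (intro exI[of _ "\<lambda>x. 1"] conjI)
  show "\<exists>x\<in>V. (1::real) \<noteq> 0" using Vne by auto
  show "\<forall>x\<in>V. Aop (\<lambda>x. 1) x = real kk * 1" using regk by (simp add: Aop_def)
qed

lemma eig_le: "t \<in> adj_eigenvalues V E \<Longrightarrow> t \<le> kk"
proof -
  assume "t \<in> adj_eigenvalues V E"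
  then obtain f where f: "\<exists>x\<in>V. f x \<noteq> 0" "\<forall>x\<in>V. Aop f x = t * f x" unfolding eig_iff by blast
  obtain x0 where x0: "x0 \<in> V" "\<forall>y\<in>V. \<bar>f y\<bar> \<le> \<bar>f x0\<bar>"
    using fin_argmax[OF finV Vne, of "\<lambda>y. \<bar>f y\<bar>"] by blast
  have pos: "\<bar>f x0\<bar> > 0" using f(1) x0 by fastforce
  have "\<bar>t\<bar> * \<bar>f x0\<bar> = \<bar>\<Sum>y\<in>Nb x0. f y\<bar>" using f(2) x0(1) by (simp add: Aop_def abs_mult)
  also have "\<dots> \<le> (\<Sum>y\<in>Nb x0. \<bar>f y\<bar>)" by (rule sum_abs)
  also have "\<dots> \<le> (\<Sum>y\<in>Nb x0. \<bar>f x0\<bar>)" using x0 by (intro sum_mono) (auto simp: Nb_def)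
  also have "\<dots> = kk * \<bar>f x0\<bar>" using regk x0 by simp
  finally have "\<bar>t\<bar> \<le> kk" using pos by (simp add: mult_le_cancel_right)
  then show ?thesis by simp
qed

lemma theta0: "\<theta> 0 = real kk"
proof -
  obtain r where r: "r \<in> {0..d}" "\<theta> r = kk" using kk_eig eig by auto
  have "\<theta> 0 \<in> adj_eigenvalues V E" using eig by auto
  then have "\<theta> 0 \<le> kk" by (rule eig_le)
  moreover have "\<theta> r \<le> \<theta> 0" using mono[of 0 r] r by (cases "r = 0") auto
  ultimately show ?thesis using r by simp
qed

lemma eig_const: "\<forall>x\<in>V. Aop f x = real kk * f x \<Longrightarrow> x \<in> V \<Longrightarrow> y \<in> V \<Longrightarrow> f x = f y"
proof -
  assume f: "\<forall>x\<in>V. Aop f x = real kk * f x" and xy: "x \<in> V" "y \<in> V"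
  from fin_argmax[OF finV Vne, of f] obtain x0 where x0: "x0 \<in> V" "\<forall>y\<in>V. f y \<le> f x0"
    by blast
  have stp: "f z = f x0" if "f w = f x0" "w \<in> V" "E w z" for w z
  proof -
    have zN: "z \<in> Nb w" using that EV by (auto simp: Nb_def)
    have NV: "Nb w \<subseteq> V" by (auto simp: Nb_def)
    have "(\<Sum>y\<in>Nb w. f x0 - f y) = real kk * f x0 - Aop f w"
      using regk[OF that(2)] by (simp add: Aop_def sum_subtractf)
    also have "\<dots> = 0" using f that by simp
    finally have eq: "(\<Sum>y\<in>Nb w. f x0 - f y) = 0" .
    have nn: "\<And>y. y \<in> Nb w \<Longrightarrow> f x0 - f y \<ge> 0" using x0(2) NV by (simp add: subset_eq)
    have "\<forall>y\<in>Nb w. f x0 - f y = 0" using sum_nonneg_eq_0_iff[OF finNb[of w], of "\<lambda>y. f x0 - f y", OF nn] eq by blast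
    then show ?thesis using zN by simp
  qed
  have all: "f w = f x0" if "w \<in> V" for w
  proof -
    have "(x0, w) \<in> R\<^sup>*" using conn x0 that by (simp add: connected_graph_def R_def)
    then show ?thesis
    proof (induction rule: rtrancl_induct)
      case base then show ?case by simp
    next
      case (step w z)
      have "E w z" using step.hyps(2) R_iff by blast
      moreover have "w \<in> V" using EV[OF \<open>E w z\<close>] by simp
      ultimately show ?case using stp[OF step.IH] by blast
    qed
  qed
  show ?thesis using all xy by simp
qed

end

lemma sum_fun_apply: "(\<Sum>a\<in>A. f a) x = (\<Sum>a\<in>A. f a x)"
  by (induction A rule: infinite_finite_induct) auto

context grph
begin

definition ZV :: "('a \<Rightarrow> real) \<Rightarrow> bool" where "ZV f \<longleftrightarrow> (\<forall>x. x \<notin> V \<longrightarrow> f x = 0)"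

lemma Aop_out: "x \<notin> V \<Longrightarrow> Aop f x = 0" by (simp add: Aop_def Nb_out)

lemma ZV_ev: "ZV f \<Longrightarrow> ZV (ev p f)"
  unfolding ZV_def by (induction p) (simp_all add: ev_pCons Aop_out)

lemma ZV_dl: "y \<in> V \<Longrightarrow> ZV (dl y)" by (auto simp: ZV_def dl_def)

lemma ev_sum: "ev (\<Sum>k\<in>K. P k) f = (\<lambda>x. \<Sum>k\<in>K. ev (P k) f x)"
  by (induction K rule: infinite_finite_induct) (simp_all add: ev_add)

lemma ev_monom: "ev (monom c k) f = (\<lambda>x. c * (Aop ^^ k) f x)"
proof -
  have "monom c k = smult c (monom 1 k)" by (simp add: smult_monom)
  then show ?thesis by (simp add: ev_smult ev_monom1)
qed

lemma krylov: assumes "ZV f" shows "\<exists>p. p \<noteq> 0 \<and> ev p f = (\<lambda>x. 0)"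
proof -
  interpret vs: vector_space "\<lambda>(c::real) (g::'a \<Rightarrow> real). (\<lambda>x. c * g x)"
    by unfold_locales (auto simp: algebra_simps fun_eq_iff)
  define N where "N = card V"
  define vec where "vec k = (Aop ^^ k) f" for k
  show ?thesis
  proof (cases "inj_on vec {0..N}")
    case False
    then obtain i j where ij: "i \<noteq> j" "vec i = vec j"
      unfolding inj_on_def by blast
    let ?p = "monom 1 i - monom (1::real) j"
    have "coeff ?p i = 1" using ij(1) by (simp add: coeff_monom)
    then have "?p \<noteq> 0" by (metis coeff_0 zero_neq_one)
    moreover have "ev ?p f = (\<lambda>x. 0)" using ij(2) by (simp add: ev_diff ev_monom vec_def)
    ultimately show ?thesis by blast
  next
    case True
    have span: "g \<in> vs.span (dl ` V)" if "ZV g" for g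
    proof -
      have "g = (\<Sum>y\<in>V. (\<lambda>x. g y * dl y x))"
      proof
        fix x
        have "(\<Sum>y\<in>V. (\<lambda>x. g y * dl y x)) x = (\<Sum>y\<in>V. if x = y then g y else 0)"
          unfolding sum_fun_apply dl_def by (intro sum.cong) auto
        also have "\<dots> = g x" using that finV by (simp add: ZV_def)
        finally show "g x = (\<Sum>y\<in>V. (\<lambda>x. g y * dl y x)) x" by simp
      qed
      also have "\<dots> \<in> vs.span (dl ` V)"
        by (intro vs.span_sum vs.span_scale vs.span_base) auto
      finally show ?thesis .
    qed
    have sub: "vec ` {0..N} \<subseteq> vs.span (dl ` V)"
    proof
      fix v assume "v \<in> vec ` {0..N}"
      then obtain k where "v = vec k" by blast
      then have "v = ev (monom 1 k) f" by (simp add: vec_def ev_monom)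
      then show "v \<in> vs.span (dl ` V)" using span ZV_ev assms by simp
    qed
    have "\<not> vs.independent (vec ` {0..N})"
    proof
      assume ind: "vs.independent (vec ` {0..N})"
      have "card (vec ` {0..N}) \<le> card (dl ` V)"
        using vs.independent_span_bound[OF _ ind sub] finV by auto
      moreover have "card (vec ` {0..N}) = N + 1" using card_image[OF True] by simp
      moreover have "card (dl ` V) \<le> N" using card_image_le[OF finV] N_def by simp
      ultimately show False by simp
    qed
    then obtain U u where U: "finite U" "U \<subseteq> vec ` {0..N}" "(\<Sum>v\<in>U. (\<lambda>x. u v * v x)) = 0"
      "\<exists>v\<in>U. u v \<noteq> 0"
      unfolding vs.dependent_explicit by blast
    define K where "K = {k\<in>{0..N}. vec k \<in> U}"
    have UK: "U = vec ` K" using U(2) unfolding K_def by blast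
    have injK: "inj_on vec K" using True unfolding K_def by (rule inj_on_subset) auto
    define p where "p = (\<Sum>k\<in>K. monom (u (vec k)) k)"
    have finK: "finite K" unfolding K_def by simp
    obtain v where v: "v \<in> U" "u v \<noteq> 0" using U(4) by blast
    then obtain k0 where k0: "k0 \<in> K" "v = vec k0" using UK by blast
    have "coeff p k0 = (\<Sum>k\<in>K. if k = k0 then u (vec k) else 0)"
      unfolding p_def coeff_sum by (intro sum.cong) (auto simp: coeff_monom)
    also have "\<dots> = u (vec k0)" using finK k0(1) by simp
    finally have "p \<noteq> 0" using v k0 by auto
    moreover have "ev p f = (\<lambda>x. 0)"
    proof
      fix x
      have "ev p f x = (\<Sum>k\<in>K. u (vec k) * vec k x)"
        unfolding p_def ev_sum by (simp add: ev_monom vec_def)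
      also have "\<dots> = (\<Sum>v\<in>U. u v * v x)"
        unfolding UK by (rule sum.reindex[OF injK, symmetric, unfolded comp_def])
      also have "\<dots> = (\<Sum>v\<in>U. (\<lambda>x. u v * v x)) x" by (simp add: sum_fun_apply)
      also have "\<dots> = 0" using U(3) by simp
      finally show "ev p f x = 0" .
    qed
    ultimately show ?thesis by blast
  qed
qed

end

context setting
begin

definition mpoly :: "real poly" where "mpoly = (\<Prod>s\<in>{0..d}. [:-\<theta> s, 1:])"

lemma inj_theta: "inj_on \<theta> {0..d}"
proof (rule inj_onI)
  fix i j assume "i \<in> {0..d}" "j \<in> {0..d}" "\<theta> i = \<theta> j"
  then show "i = j" using mono[of i j] mono[of j i] by (cases "i < j"; cases "j < i") auto
qed

lemma ip_sq_zero: "ZV g \<Longrightarrow> ip g g = 0 \<Longrightarrow> g = (\<lambda>x. 0)"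
proof -
  assume z: "ZV g" "ip g g = 0"
  have "\<forall>x\<in>V. g x * g x = 0"
    using z(2) sum_nonneg_eq_0_iff[OF finV, of "\<lambda>x. g x * g x"] unfolding ip_def by simp
  then show ?thesis using z(1) unfolding ZV_def by (auto simp: fun_eq_iff)
qed

lemma ip_sq_nonneg: "ip g g \<ge> 0" unfolding ip_def by (intro sum_nonneg) simp

lemma kerim:
  assumes h: "ZV h" and g: "\<forall>x\<in>V. Aop g x = t * g x" and gh: "g = ev [:-t, 1:] h"
  shows "g = (\<lambda>x. 0)"
proof -
  have gZ: "ZV g" using ZV_ev[OF h] gh by simp
  have g': "g = (\<lambda>x. - t * h x + Aop h x)" unfolding gh by (simp add: ev_pCons' ev_const)
  have "ip g g = ip (\<lambda>x. - t * h x + Aop h x) g" by (simp only: g'[symmetric])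
  also have "\<dots> = - t * ip h g + ip (Aop h) g"
    unfolding ip_def by (simp add: algebra_simps sum.distrib sum_subtractf sum_distrib_left sum_negf)
  also have "ip (Aop h) g = ip h (Aop g)" by (rule ip_Aop)
  also have "ip h (Aop g) = t * ip h g"
    unfolding ip_def sum_distrib_left using g by (intro sum.cong) auto
  finally have "ip g g = 0" by simp
  then show ?thesis using ip_sq_zero gZ by blast
qed

lemma quad:
  assumes gZ: "ZV g" and b: "b \<noteq> 0" and e: "\<forall>x\<in>V. ev [:a^2+b^2, -2*a, 1:] g x = 0"
  shows "g = (\<lambda>x. 0)"
proof -
  define h where "h = Aop g"
  have ev: "ev [:a^2+b^2, -2*a, 1:] g x = (a^2+b^2) * g x - 2 * a * h x + Aop h x" for x
    by (simp add: ev_pCons' ev_const h_def)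
  have "0 = ip (ev [:a^2+b^2, -2*a, 1:] g) g"
    unfolding ip_def using e by simp
  also have "\<dots> = (a^2+b^2) * ip g g - 2 * a * ip h g + ip (Aop h) g"
    unfolding ev ip_def by (simp add: sum.distrib sum_subtractf sum_distrib_left algebra_simps)
  also have "ip (Aop h) g = ip h h" by (simp add: ip_Aop h_def)
  finally have 1: "0 = (a^2+b^2) * ip g g - 2 * a * ip h g + ip h h" .
  have 2: "ip (\<lambda>x. h x - a * g x) (\<lambda>x. h x - a * g x) = ip h h - 2 * a * ip h g + a^2 * ip g g"
    unfolding ip_def by (simp add: sum.distrib sum_subtractf sum_distrib_left algebra_simps power2_eq_square)
  have 3: "ip (\<lambda>x. h x - a * g x) (\<lambda>x. h x - a * g x) \<ge> 0" by (rule ip_sq_nonneg)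
  have "b^2 * ip g g \<le> 0" using 1 2 3 by (simp add: algebra_simps)
  moreover have "b^2 > 0" using b by simp
  ultimately have "ip g g \<le> 0" by (simp add: mult_le_0_iff)
  then have "ip g g = 0" using ip_sq_nonneg[of g] by simp
  then show ?thesis using ip_sq_zero gZ by blast
qed

lemma ZV_zero: "ZV g \<Longrightarrow> \<forall>x\<in>V. g x = 0 \<Longrightarrow> g = (\<lambda>x. 0)"
  unfolding ZV_def by (auto simp: fun_eq_iff)

lemma ann: "ZV f \<Longrightarrow> p \<noteq> 0 \<Longrightarrow> ev p f = (\<lambda>x. 0) \<Longrightarrow> ev mpoly f = (\<lambda>x. 0)"
proof (induction "degree p" arbitrary: p f rule: less_induct)
  case less
  show ?case
  proof (cases "degree p = 0")
    case True
    then obtain c where c: "p = [:c:]" by (metis degree_eq_zeroE)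
    then have "c \<noteq> 0" using less.prems by simp
    then have "f = (\<lambda>x. 0)" using less.prems(3) c by (simp add: ev_const fun_eq_iff)
    then show ?thesis by simp
  next
    case False
    define g where "g = ev mpoly f"
    have gZ: "ZV g" unfolding g_def using ZV_ev less.prems by blast
    from real_factor[of p] False consider
      (lin) a p' where "p = [:-a, 1:] * p'" | (qd) a b p' where "b \<noteq> 0" "p = [:a^2+b^2, -2*a, 1:] * p'"
      by auto
    then show ?thesis
    proof cases
      case lin
      have p'0: "p' \<noteq> 0" using lin less.prems by auto
      have "degree p = degree [:-a, 1:] + degree p'"
        unfolding lin by (rule degree_mult_eq) (use p'0 in auto)
      then have dp: "degree p' < degree p" by simp
      define h where "h = ev [:-a, 1:] f"
      have hZ: "ZV h" unfolding h_def using ZV_ev less.prems by blast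
      have "ev p f = ev p' h" unfolding lin h_def by (subst mult.commute) (rule ev_mult)
      then have "ev p' h = (\<lambda>x. 0)" using less.prems(3) by simp
      then have "ev mpoly h = (\<lambda>x. 0)" using less.hyps[OF dp hZ p'0] by blast
      then have eg: "ev [:-a, 1:] g = (\<lambda>x. 0)" unfolding g_def h_def by (simp add: ev_comm)
      have ag: "\<forall>x\<in>V. Aop g x = a * g x"
      proof
        fix x assume "x \<in> V"
        have "ev [:-a, 1:] g x = 0" using eg by simp
        then show "Aop g x = a * g x" by (simp add: ev_pCons ev_const)
      qed
      show ?thesis
      proof (cases "\<exists>x\<in>V. g x \<noteq> 0")
        case True
        then have "a \<in> adj_eigenvalues V E" unfolding eig_iff using ag by blast
        then obtain r where r: "r \<in> {0..d}" "a = \<theta> r" using eig by auto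
        have mfac: "mpoly = [:-\<theta> r, 1:] * (\<Prod>s\<in>{0..d} - {r}. [:-\<theta> s, 1:])"
          unfolding mpoly_def using r(1) by (simp add: prod.remove)
        have "g = ev [:-a, 1:] (ev (\<Prod>s\<in>{0..d} - {r}. [:-\<theta> s, 1:]) f)"
          unfolding g_def mfac r(2) by (rule ev_mult)
        then have "g = (\<lambda>x. 0)" using kerim[OF ZV_ev[OF less.prems(1)] ag] by blast
        then show ?thesis using True by simp
      next
        case False
        then have "g = (\<lambda>x. 0)" using ZV_zero[OF gZ] by blast
        then show ?thesis using g_def by simp
      qed
    next
      case qd
      have p'0: "p' \<noteq> 0" using qd less.prems by auto
      have "degree p = degree [:a^2+b^2, -2*a, 1:] + degree p'"
        unfolding qd by (rule degree_mult_eq) (use p'0 in auto)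
      then have dp: "degree p' < degree p" by simp
      define h where "h = ev [:a^2+b^2, -2*a, 1:] f"
      have hZ: "ZV h" unfolding h_def using ZV_ev less.prems by blast
      have "ev p f = ev p' h" unfolding qd(2) h_def by (subst mult.commute) (rule ev_mult)
      then have "ev p' h = (\<lambda>x. 0)" using less.prems(3) by simp
      then have "ev mpoly h = (\<lambda>x. 0)" using less.hyps[OF dp hZ p'0] by blast
      then have eg: "ev [:a^2+b^2, -2*a, 1:] g = (\<lambda>x. 0)" unfolding g_def h_def by (simp add: ev_comm)
      then have "\<forall>x\<in>V. ev [:a^2+b^2, -2*a, 1:] g x = 0" by simp
      then have "g = (\<lambda>x. 0)" by (rule quad[OF gZ qd(1)])
      then show ?thesis using g_def by simp
    qed
  qed
qed

lemma m_zero: "x \<in> V \<Longrightarrow> ev mpoly f x = 0"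
proof -
  assume x: "x \<in> V"
  have "ev mpoly (dl y) = (\<lambda>x. 0)" if y: "y \<in> V" for y
  proof -
    obtain p where "p \<noteq> 0" "ev p (dl y) = (\<lambda>x. 0)" using krylov[OF ZV_dl[OF y]] by blast
    then show ?thesis using ann[OF ZV_dl[OF y]] by blast
  qed
  then show ?thesis using ev_expand[OF x, of mpoly f] by simp
qed

lemma prod_dvd:
  "finite S \<Longrightarrow> inj_on \<theta> S \<Longrightarrow> \<forall>s\<in>S. poly p (\<theta> s) = 0 \<Longrightarrow> (\<Prod>s\<in>S. [:-\<theta> s, 1:]) dvd p"
proof (induction S arbitrary: p rule: finite_induct)
  case empty then show ?case by simp
next
  case (insert a S)
  have "poly p (\<theta> a) = 0" using insert.prems by simp
  then obtain p' where p': "p = [:-\<theta> a, 1:] * p'" by (metis dvdE poly_eq_0_iff_dvd)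
  have "\<forall>s\<in>S. poly p' (\<theta> s) = 0"
  proof
    fix s assume s: "s \<in> S"
    have "\<theta> s \<noteq> \<theta> a" using insert.prems(1) insert.hyps(2) s unfolding inj_on_def by (metis insertCI)
    moreover have "poly p (\<theta> s) = 0" using insert.prems s by simp
    ultimately show "poly p' (\<theta> s) = 0" using p' by simp
  qed
  then have "(\<Prod>s\<in>S. [:-\<theta> s, 1:]) dvd p'" using insert.IH insert.prems(1) by simp
  then have "[:-\<theta> a, 1:] * (\<Prod>s\<in>S. [:-\<theta> s, 1:]) dvd p" unfolding p' by (rule mult_dvd_mono[OF dvd_refl])
  moreover have "(\<Prod>s\<in>insert a S. [:-\<theta> s, 1:]) = [:-\<theta> a, 1:] * (\<Prod>s\<in>S. [:-\<theta> s, 1:])"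
    using insert.hyps by (rule prod.insert)
  ultimately show ?case by simp
qed

lemma vanish: "\<forall>r\<in>{0..d}. poly p (\<theta> r) = 0 \<Longrightarrow> x \<in> V \<Longrightarrow> ev p f x = 0"
proof -
  assume a: "\<forall>r\<in>{0..d}. poly p (\<theta> r) = 0" and x: "x \<in> V"
  have "mpoly dvd p" unfolding mpoly_def using prod_dvd[OF _ inj_theta a] by simp
  then obtain s where "p = mpoly * s" by (elim dvdE)
  then show ?thesis using m_zero[OF x] by (simp add: ev_mult)
qed

end

lemma lin_prod_deg: "degree (\<Prod>s\<in>S. [:- (t s), 1:] :: real poly) = card S"
  by (subst degree_prod_eq_sum_degree) auto

lemma lin_prod_lc: "coeff (\<Prod>s\<in>S. [:- (t s), 1:] :: real poly) (card S) = 1"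
  using lead_coeff_prod[of "\<lambda>s. [:- (t s), 1:]" S] lin_prod_deg[of t S] by simp

context setting
begin

definition Hp :: "real poly" where
  "Hp = smult (real n * (\<Prod>s\<in>{1..d}. 1 / (\<theta> 0 - \<theta> s))) (\<Prod>s\<in>{1..d}. [:-\<theta> s, 1:])"

definition qp :: "real poly" where
  "qp = (\<Sum>r\<in>{0..d}. smult ((-1) ^ r * (\<Prod>s\<in>{0..d} - {r}. 1 / (\<theta> r - \<theta> s)))
                                (\<Prod>s\<in>{0..d} - {r}. [:-\<theta> s, 1:]))"

lemma card_rm: "r \<in> {0..d} \<Longrightarrow> card ({0..d} - {r}) = d" by simp

lemma deg_Hp: "degree Hp \<le> d"
  unfolding Hp_def using lin_prod_deg[of \<theta> "{1..d}"] degree_smult_le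
  by (metis card_atLeastAtMost diff_Suc_1)

lemma coeff_Hp: "coeff Hp d = real n * (\<Prod>s\<in>{1..d}. 1 / (\<theta> 0 - \<theta> s))"
  unfolding Hp_def using lin_prod_lc[of \<theta> "{1..d}"] by simp

lemma deg_qp: "degree qp \<le> d"
  unfolding qp_def
proof (rule degree_sum_le)
  fix r assume "r \<in> {0..d}"
  then show "degree (smult ((-1) ^ r * (\<Prod>s\<in>{0..d} - {r}. 1 / (\<theta> r - \<theta> s)))
                                (\<Prod>s\<in>{0..d} - {r}. [:-\<theta> s, 1:])) \<le> d"
    using lin_prod_deg[of \<theta> "{0..d} - {r}"] card_rm degree_smult_le by metis
qed simp

lemma coeff_qp: "coeff qp d = (\<Sum>r\<in>{0..d}. (-1) ^ r * (\<Prod>s\<in>{0..d} - {r}. 1 / (\<theta> r - \<theta> s)))"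
  unfolding qp_def coeff_sum
proof (intro sum.cong refl)
  fix r assume r: "r \<in> {0..d}"
  show "coeff (smult ((-1) ^ r * (\<Prod>s\<in>{0..d} - {r}. 1 / (\<theta> r - \<theta> s)))
                                (\<Prod>s\<in>{0..d} - {r}. [:-\<theta> s, 1:])) d =
        (-1) ^ r * (\<Prod>s\<in>{0..d} - {r}. 1 / (\<theta> r - \<theta> s))"
    using lin_prod_lc[of \<theta> "{0..d} - {r}"] card_rm[OF r] by simp
qed

lemma theta_ne: "r \<in> {0..d} \<Longrightarrow> s \<in> {0..d} \<Longrightarrow> r \<noteq> s \<Longrightarrow> \<theta> r \<noteq> \<theta> s"
  using inj_theta unfolding inj_on_def by blast

lemma poly_qp: "r \<in> {0..d} \<Longrightarrow> poly qp (\<theta> r) = (-1) ^ r"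
proof -
  assume r: "r \<in> {0..d}"
  have "poly qp (\<theta> r) = (\<Sum>r'\<in>{0..d}. if r' = r then (-1) ^ r else 0)"
    unfolding qp_def poly_sum
  proof (intro sum.cong refl)
    fix r' assume r': "r' \<in> {0..d}"
    show "poly (smult ((-1) ^ r' * (\<Prod>s\<in>{0..d} - {r'}. 1 / (\<theta> r' - \<theta> s)))
                                (\<Prod>s\<in>{0..d} - {r'}. [:-\<theta> s, 1:])) (\<theta> r) =
          (if r' = r then (-1) ^ r else 0)"
    proof (cases "r' = r")
      case True
      have "(\<Prod>s\<in>{0..d} - {r}. 1 / (\<theta> r - \<theta> s)) * (\<Prod>s\<in>{0..d} - {r}. \<theta> r - \<theta> s) = 1"
        unfolding prod.distrib[symmetric]
        by (rule prod.neutral) (use theta_ne r in auto)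
      then show ?thesis using True by (simp add: poly_prod)
    next
      case False
      have "(\<Prod>s\<in>{0..d} - {r'}. \<theta> r - \<theta> s) = 0"
        using r False by (intro prod_zero) auto
      then show ?thesis using False by (simp add: poly_prod)
    qed
  qed
  also have "\<dots> = (-1) ^ r" using r by simp
  finally show ?thesis .
qed

lemma poly_Hp0: "poly Hp (\<theta> 0) = real n"
proof -
  have "(\<Prod>s\<in>{1..d}. 1 / (\<theta> 0 - \<theta> s)) * (\<Prod>s\<in>{1..d}. \<theta> 0 - \<theta> s) = 1"
    unfolding prod.distrib[symmetric]
    by (rule prod.neutral) (use theta_ne in auto)
  then show ?thesis unfolding Hp_def by (simp add: poly_prod)
qed

lemma poly_Hp: "r \<in> {1..d} \<Longrightarrow> poly Hp (\<theta> r) = 0"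
proof -
  assume r: "r \<in> {1..d}"
  have "(\<Prod>s\<in>{1..d}. \<theta> r - \<theta> s) = 0" using r by (intro prod_zero) auto
  then show ?thesis unfolding Hp_def by (simp add: poly_prod)
qed

lemma n_pos: "real n > 0" using cardV finV Vne by auto

lemma hoffman: "x \<in> V \<Longrightarrow> y \<in> V \<Longrightarrow> ev Hp (dl y) x = 1"
proof -
  assume x: "x \<in> V" and y: "y \<in> V"
  have van: "\<forall>r\<in>{0..d}. poly ([:-\<theta> 0, 1:] * Hp) (\<theta> r) = 0"
  proof
    fix r assume r: "r \<in> {0..d}"
    show "poly ([:-\<theta> 0, 1:] * Hp) (\<theta> r) = 0"
      using poly_Hp[of r] r by (cases "r = 0") auto
  qed
  have col: "ev Hp (dl z) w = ev Hp (dl z) w'" if "z \<in> V" "w \<in> V" "w' \<in> V" for z w w'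
  proof (rule eig_const[OF _ that(2,3)])
    show "\<forall>x\<in>V. Aop (ev Hp (dl z)) x = real kk * ev Hp (dl z) x"
    proof
      fix x assume x: "x \<in> V"
      have "ev ([:-\<theta> 0, 1:] * Hp) (dl z) x = 0" using vanish[OF van x] .
      then have "ev [:-\<theta> 0, 1:] (ev Hp (dl z)) x = 0" by (simp only: ev_mult)
      then show "Aop (ev Hp (dl z)) x = real kk * ev Hp (dl z) x"
        by (simp add: ev_pCons ev_const theta0)
    qed
  qed
  have all: "ev Hp (dl z) x = ev Hp (dl x) x" if "z \<in> V" for z
    using col[OF x that x] ev_sym[OF x that, of Hp] by simp
  have "ev Hp (\<lambda>_. 1) x = poly Hp (real kk) * 1"
    by (rule ev_eig[OF _ x]) (use regk in \<open>simp add: Aop_def\<close>)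
  also have "\<dots> = real n" using poly_Hp0 theta0 by simp
  finally have "real n = (\<Sum>z\<in>V. ev Hp (dl z) x * 1)" using ev_expand[OF x, of Hp "\<lambda>_. 1"] by simp
  also have "\<dots> = real n * ev Hp (dl x) x" using all cardV by simp
  finally have "ev Hp (dl x) x = 1" using n_pos by simp
  then show ?thesis using all[OF y] by simp
qed

lemma qsq: "u \<in> V \<Longrightarrow> (\<Sum>v\<in>V. (ev qp (dl u) v)^2) = 1"
proof -
  assume u: "u \<in> V"
  have van: "\<forall>r\<in>{0..d}. poly (qp * qp - 1) (\<theta> r) = 0"
    using poly_qp by (simp add: power_mult_distrib[symmetric] flip: power2_eq_square power_mult)
  have "ev (qp * qp - 1) (dl u) u = 0" using vanish[OF van u] .
  then have "ev (qp * qp) (dl u) u = 1" by (simp add: ev_diff dl_def)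
  moreover have "ev (qp * qp) (dl u) u = (\<Sum>v\<in>V. ev qp (dl v) u * ev qp (dl u) v)"
    unfolding ev_mult by (rule ev_expand[OF u])
  moreover have "\<dots> = (\<Sum>v\<in>V. (ev qp (dl u) v)^2)"
    using ev_sym[OF _ u, of _ qp] by (intro sum.cong) (auto simp: power2_eq_square)
  ultimately show ?thesis by simp
qed

lemma qp_at_d: "x \<in> V \<Longrightarrow> y \<in> V \<Longrightarrow> gd x y = d \<Longrightarrow> ev qp (dl y) x = 1"
proof -
  assume x: "x \<in> V" and y: "y \<in> V" and g: "gd x y = d"
  have "\<forall>j \<ge> gd x y. coeff (qp - Hp) j = 0"
  proof (intro allI impI)
    fix j assume "gd x y \<le> j"
    then show "coeff (qp - Hp) j = 0"
      using g coeff_qp coeff_Hp cond deg_qp deg_Hp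
      by (cases "j = d") (auto simp: coeff_eq_0)
  qed
  then have "ev (qp - Hp) (dl y) x = 0" by (rule ev_far)
  then show ?thesis using hoffman[OF x y] by (simp add: ev_diff)
qed

lemma qp_struct: "u \<in> V \<Longrightarrow> v \<in> V \<Longrightarrow> ev qp (dl u) v = (if gd v u = d then 1 else 0)"
  and antipode_unique: "u \<in> V \<Longrightarrow> v \<in> V \<Longrightarrow> w \<in> V \<Longrightarrow> gd u v = d \<Longrightarrow> gd u w = d \<Longrightarrow> v = w"
proof -
  have main: "\<exists>v0\<in>V. \<forall>v\<in>V. ev qp (dl u) v = (if v = v0 then 1 else 0) \<and> (gd v u = d \<longleftrightarrow> v = v0)"
    if u: "u \<in> V" for u
  proof -
    obtain v0 where v0: "v0 \<in> V" "gd u v0 = d" using ecc_ex[OF u] by blast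
    have v0': "gd v0 u = d" using v0 gd_sym u by simp
    have e0: "ev qp (dl u) v0 = 1" using qp_at_d[OF v0(1) u v0'] .
    have "1 = (\<Sum>v\<in>V. (ev qp (dl u) v)^2)" using qsq[OF u] by simp
    also have "\<dots> = (ev qp (dl u) v0)^2 + (\<Sum>v\<in>V - {v0}. (ev qp (dl u) v)^2)"
      using finV v0(1) by (simp add: sum.remove)
    finally have "(\<Sum>v\<in>V - {v0}. (ev qp (dl u) v)^2) = 0" using e0 by simp
    then have z: "\<forall>v\<in>V - {v0}. (ev qp (dl u) v)^2 = 0"
      using sum_nonneg_eq_0_iff[of "V - {v0}" "\<lambda>v. (ev qp (dl u) v)^2"] finV by simp
    show ?thesis
    proof (intro bexI[OF _ v0(1)] ballI conjI)
      fix v assume v: "v \<in> V"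
      show ev: "ev qp (dl u) v = (if v = v0 then 1 else 0)" using z v e0 by auto
      show "gd v u = d \<longleftrightarrow> v = v0"
      proof
        assume "gd v u = d"
        then have "ev qp (dl u) v = 1" using qp_at_d[OF v u] by simp
        then show "v = v0" using ev by (auto split: if_splits)
      qed (use v0' in simp)
    qed
  qed
  show "u \<in> V \<Longrightarrow> v \<in> V \<Longrightarrow> ev qp (dl u) v = (if gd v u = d then 1 else 0)"
    using main by fastforce
  show "u \<in> V \<Longrightarrow> v \<in> V \<Longrightarrow> w \<in> V \<Longrightarrow> gd u v = d \<Longrightarrow> gd u w = d \<Longrightarrow> v = w"
    using main gd_sym by metis
qed

end

lemma deg_drop: "degree (p::real poly) \<le> Suc i \<Longrightarrow> coeff p (Suc i) = 0 \<Longrightarrow> degree p \<le> i"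
proof (rule degree_le, intro allI impI)
  fix m assume "degree p \<le> Suc i" "coeff p (Suc i) = 0" "i < m"
  then show "coeff p m = 0" by (cases "m = Suc i") (auto simp: coeff_eq_0)
qed

context setting
begin

definition rep :: "nat \<Rightarrow> real poly \<Rightarrow> bool" where
  "rep i a \<longleftrightarrow> degree a \<le> i \<and> (\<forall>x\<in>V. \<forall>y\<in>V. ev a (dl y) x = (if gd x y = i then 1 else 0))"

lemma lc_nz:
  assumes "degree a \<le> i" "x \<in> V" "y \<in> V" "gd x y = i" "ev a (dl y) x \<noteq> 0"
  shows "coeff a i \<noteq> 0"
proof -
  have "ev a (dl y) x = coeff a i * W i y x"
    using ev_at[of x y a] assms by (simp add: coeff_eq_0)
  then show ?thesis using assms(5) by auto
qed

lemma rep_lc: "rep i a \<Longrightarrow> i \<le> d \<Longrightarrow> coeff a i \<noteq> 0"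
proof -
  assume r: "rep i a" and i: "i \<le> d"
  obtain x y where xy: "x \<in> V" "y \<in> V" "gd x y = i" using dist_ex[OF i] by blast
  show ?thesis by (rule lc_nz[OF _ xy]) (use r xy in \<open>auto simp: rep_def\<close>)
qed

definition Q :: "nat \<Rightarrow> bool" where
  "Q i \<longleftrightarrow> (\<exists>a b s. rep i a \<and> degree b \<le> Suc i \<and> coeff b (Suc i) \<noteq> 0 \<and>
     (\<forall>x\<in>V. \<forall>y\<in>V. ev b (dl y) x = (if gd x y = Suc i then 1 else 0)) \<and>
     degree s \<le> i \<and> (\<forall>x\<in>V. \<forall>y\<in>V. ev s (dl y) x = (if gd x y \<le> i then 1 else 0)))"

lemma Q_d: "Q d"
  unfolding Q_def
proof (intro exI conjI)
  show "rep d qp" unfolding rep_def using deg_qp qp_struct by simp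
  show "degree mpoly \<le> Suc d" unfolding mpoly_def using lin_prod_deg[of \<theta> "{0..d}"] by simp
  show "coeff mpoly (Suc d) \<noteq> 0" unfolding mpoly_def using lin_prod_lc[of \<theta> "{0..d}"] by simp
  show "\<forall>x\<in>V. \<forall>y\<in>V. ev mpoly (dl y) x = (if gd x y = Suc d then 1 else 0)"
    using m_zero gd_le_d by fastforce
  show "degree Hp \<le> d" by (rule deg_Hp)
  show "\<forall>x\<in>V. \<forall>y\<in>V. ev Hp (dl y) x = (if gd x y \<le> d then 1 else 0)"
    using hoffman gd_le_d by simp
qed

lemma Q_step: assumes "Q (Suc j)" "Suc j \<le> d" shows "Q j"
proof -
  define i where "i = Suc j"
  obtain a b s where a: "rep i a" and b: "degree b \<le> Suc i" "coeff b (Suc i) \<noteq> 0"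
     "\<forall>x\<in>V. \<forall>y\<in>V. ev b (dl y) x = (if gd x y = Suc i then 1 else 0)"
    and s: "degree s \<le> i" "\<forall>x\<in>V. \<forall>y\<in>V. ev s (dl y) x = (if gd x y \<le> i then 1 else 0)"
    using assms(1) unfolding Q_def i_def by blast
  have id: "i \<le> d" using assms(2) i_def by simp
  have lca: "coeff a i \<noteq> 0" using rep_lc[OF a id] .
  have dega: "degree a \<le> i" and eva: "\<forall>x\<in>V. \<forall>y\<in>V. ev a (dl y) x = (if gd x y = i then 1 else 0)"
    using a unfolding rep_def by auto
  define s' where "s' = s - a"
  have evs': "ev s' (dl y) x = (if gd x y \<le> j then 1 else 0)" if "x \<in> V" "y \<in> V" for x y
    using s(2) eva that unfolding s'_def i_def by (simp add: ev_diff)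
  obtain x0 y0 where xy0: "x0 \<in> V" "y0 \<in> V" "gd x0 y0 = i" using dist_ex[OF id] by blast
  have "degree s' \<le> i" unfolding s'_def using s(1) dega by (simp add: degree_diff_le)
  have ci: "coeff s' i = 0"
  proof -
    have "ev s' (dl y0) x0 = coeff s' i * W i y0 x0"
      using ev_at[of x0 y0 s'] \<open>degree s' \<le> i\<close> xy0 by (simp add: coeff_eq_0)
    moreover have "ev s' (dl y0) x0 = 0" using evs'[OF xy0(1,2)] xy0 i_def by simp
    moreover have "W i y0 x0 > 0" using W_gd_pos[OF xy0(1,2)] xy0 by simp
    ultimately show ?thesis by simp
  qed
  have degs': "degree s' \<le> j"
  proof (rule degree_le, intro allI impI)
    fix m assume "j < m"
    then show "coeff s' m = 0" using ci \<open>degree s' \<le> i\<close> i_def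
      by (cases "m = i") (auto simp: coeff_eq_0)
  qed
  define c1 where "c1 = coeff a i / coeff b (Suc i)"
  define w0 where "w0 = pCons 0 a - smult c1 b"
  define c0 where "c0 = coeff w0 i / coeff a i"
  define w where "w = w0 - smult c0 a"
  have "degree w0 \<le> Suc i" unfolding w0_def using dega b(1)
    by (intro degree_diff_le) (auto simp: degree_pCons_le intro: order.trans[OF degree_smult_le])
  moreover have "coeff w0 (Suc i) = 0" unfolding w0_def c1_def using b(2) by simp
  ultimately have degw0: "degree w0 \<le> i" by (rule deg_drop)
  have degw1: "degree w \<le> i" unfolding w_def using degw0 dega
    by (intro degree_diff_le) (auto intro: order.trans[OF degree_smult_le])
  have "coeff w i = 0" unfolding w_def c0_def using lca by simp
  then have degw: "degree w \<le> j"
    using degw1 i_def deg_drop by simp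
  have evw: "ev w (dl y) x = (\<Sum>z\<in>Nb x. if gd z y = i then 1 else 0)
     - c1 * (if gd x y = Suc i then 1 else 0) - c0 * (if gd x y = i then 1 else 0)"
    if "x \<in> V" "y \<in> V" for x y
  proof -
    have "Aop (ev a (dl y)) x = (\<Sum>z\<in>Nb x. if gd z y = i then 1 else 0)"
      unfolding Aop_def using eva that by (intro sum.cong) (auto simp: Nb_def)
    then show ?thesis unfolding w_def w0_def using b(3) eva that
      by (simp add: ev_diff ev_smult ev_pCons)
  qed
  obtain xs ys where xys: "xs \<in> V" "ys \<in> V" "gd xs ys = j" using dist_ex[of j] assms(2) by auto
  define \<gamma> where "\<gamma> = coeff w j / coeff s' j"
  have cs'j: "coeff s' j \<noteq> 0"
    by (rule lc_nz[OF degs' xys]) (use evs'[OF xys(1,2)] xys in simp)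
  have wA: "ev w (dl y) x = \<gamma> * (if gd x y = j then 1 else 0)" if xy: "x \<in> V" "y \<in> V" for x y
  proof (cases "gd x y = j")
    case True
    have 1: "ev w (dl y) x = coeff w j * W j y x"
      using ev_at[of x y w] degw True by (simp add: coeff_eq_0)
    have 2: "ev s' (dl y) x = coeff s' j * W j y x"
      using ev_at[of x y s'] degs' True by (simp add: coeff_eq_0)
    have 3: "ev s' (dl y) x = 1" using evs'[OF xy] True by simp
    show ?thesis using 1 2 3 cs'j True unfolding \<gamma>_def by (simp add: field_simps)
  next
    case False
    show ?thesis
    proof (cases "gd x y < j")
      case True
      have "(\<Sum>z\<in>Nb x. if gd z y = i then 1 else (0::real)) = 0"
      proof (intro sum.neutral ballI)
        fix z assume z: "z \<in> Nb x"
        then have zV: "z \<in> V" and Exz: "E x z" by (auto simp: Nb_def)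
        have "gd z y \<le> gd z x + gd x y" using gd_tri zV xy by blast
        moreover have "gd z x \<le> 1" using gd_edge Esym Exz by blast
        ultimately show "(if gd z y = i then 1 else (0::real)) = 0" using True i_def by auto
      qed
      then show ?thesis using evw[OF xy] True False i_def by simp
    next
      case False2: False
      have "ev w (dl y) x = 0" by (rule ev_far) (use degw False False2 in \<open>auto simp: coeff_eq_0\<close>)
      then show ?thesis using False by simp
    qed
  qed
  have \<gamma>0: "\<gamma> \<noteq> 0"
  proof -
    obtain u x z where uxz: "u \<in> V" "x \<in> V" "z \<in> V" "gd x u = i - 1" "E x z" "gd z u = i"
      using geodesic[of i] id i_def by auto
    have zN: "z \<in> Nb x" using uxz by (simp add: Nb_def)
    have "(\<Sum>z\<in>Nb x. if gd z u = i then 1 else (0::real)) \<ge> (if gd z u = i then 1 else 0)"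
      by (rule member_le_sum[OF zN]) auto
    then have "(\<Sum>z\<in>Nb x. if gd z u = i then 1 else (0::real)) \<ge> 1" using uxz by simp
    then have "ev w (dl u) x \<ge> 1" using evw[OF uxz(2,1)] uxz i_def by simp
    moreover have "ev w (dl u) x = \<gamma>" using wA[OF uxz(2,1)] uxz i_def by simp
    ultimately show ?thesis by simp
  qed
  show ?thesis unfolding Q_def
  proof (intro exI conjI)
    show "rep j (smult (1/\<gamma>) w)" unfolding rep_def
      using degw wA \<gamma>0 by (simp add: ev_smult degree_smult_le order.trans[OF degree_smult_le])
    show "degree a \<le> Suc j" using dega i_def by simp
    show "coeff a (Suc j) \<noteq> 0" using lca i_def by simp
    show "\<forall>x\<in>V. \<forall>y\<in>V. ev a (dl y) x = (if gd x y = Suc j then 1 else 0)" using eva i_def by simp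
    show "degree s' \<le> j" by (rule degs')
    show "\<forall>x\<in>V. \<forall>y\<in>V. ev s' (dl y) x = (if gd x y \<le> j then 1 else 0)" using evs' by simp
  qed
qed

lemma Q_all: "i \<le> d \<Longrightarrow> Q i"
proof -
  have "Q (d - m)" for m
  proof (induction m)
    case 0 then show ?case using Q_d by simp
  next
    case (Suc m)
    show ?case
    proof (cases "m < d")
      case True
      then have "d - m = Suc (d - Suc m)" by simp
      then show ?thesis using Q_step[of "d - Suc m"] Suc.IH True by simp
    next
      case False
      then show ?thesis using Suc.IH by simp
    qed
  qed
  then show "i \<le> d \<Longrightarrow> Q i" by (metis diff_diff_cancel)
qed

lemma rep_ex: "i \<le> d \<Longrightarrow> \<exists>a. rep i a"
  using Q_all unfolding Q_def by blast

end


context setting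
begin

lemma span_le: "k \<le> d \<Longrightarrow> degree r \<le> k \<Longrightarrow> \<exists>\<gamma>. \<forall>x\<in>V. \<forall>y\<in>V. ev r (dl y) x = \<gamma> (gd x y)"
proof (induction k arbitrary: r)
  case 0
  obtain a where a: "rep 0 a" using rep_ex by auto
  have lc: "coeff a 0 \<noteq> 0" using rep_lc[OF a] by simp
  define c where "c = coeff r 0 / coeff a 0"
  define r' where "r' = r - smult c a"
  have "r' = 0"
  proof (rule poly_eqI)
    fix m show "coeff r' m = coeff 0 m"
    proof (cases m)
      case 0 then show ?thesis unfolding r'_def c_def using lc by simp
    next
      case (Suc m')
      have "degree a \<le> 0" using a by (simp add: rep_def)
      then show ?thesis unfolding r'_def using 0 Suc by (simp add: coeff_eq_0)
    qed
  qed
  then have "r = smult c a" unfolding r'_def by simp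
  then have "\<forall>x\<in>V. \<forall>y\<in>V. ev r (dl y) x = c * (if gd x y = 0 then 1 else 0)"
    using a by (simp add: ev_smult rep_def)
  then show ?case by (intro exI[of _ "\<lambda>t. c * (if t = 0 then 1 else 0)"]) simp
next
  case (Suc k)
  obtain a where a: "rep (Suc k) a" using rep_ex Suc.prems by auto
  have lc: "coeff a (Suc k) \<noteq> 0" using rep_lc[OF a] Suc.prems by simp
  define c where "c = coeff r (Suc k) / coeff a (Suc k)"
  define r' where "r' = r - smult c a"
  have "degree r' \<le> Suc k" unfolding r'_def using a Suc.prems
    by (intro degree_diff_le) (auto simp: rep_def intro: order.trans[OF degree_smult_le])
  moreover have "coeff r' (Suc k) = 0" unfolding r'_def c_def using lc by simp
  ultimately have "degree r' \<le> k" by (rule deg_drop)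
  moreover have "k \<le> d" using Suc.prems by simp
  ultimately obtain \<gamma> where g: "\<forall>x\<in>V. \<forall>y\<in>V. ev r' (dl y) x = \<gamma> (gd x y)"
    using Suc.IH by blast
  have "r = r' + smult c a" unfolding r'_def by simp
  then have "\<forall>x\<in>V. \<forall>y\<in>V. ev r (dl y) x = \<gamma> (gd x y) + c * (if gd x y = Suc k then 1 else 0)"
    using a g by (simp add: ev_smult ev_add rep_def)
  then show ?case by (intro exI[of _ "\<lambda>t. \<gamma> t + c * (if t = Suc k then 1 else 0)"]) simp
qed

lemma poly_m: "r \<in> {0..d} \<Longrightarrow> poly mpoly (\<theta> r) = 0"
  unfolding mpoly_def poly_prod by (intro prod_zero) auto

lemma span_all: "\<exists>\<gamma>. \<forall>x\<in>V. \<forall>y\<in>V. ev r (dl y) x = \<gamma> (gd x y)"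
proof -
  define r' where "r' = r mod mpoly"
  have m0: "mpoly \<noteq> 0" unfolding mpoly_def by simp
  have dm: "degree mpoly = Suc d" unfolding mpoly_def using lin_prod_deg[of \<theta> "{0..d}"] by simp
  have "degree r' \<le> d" using degree_mod_less[OF m0, of r] dm unfolding r'_def by auto
  then obtain \<gamma> where g: "\<forall>x\<in>V. \<forall>y\<in>V. ev r' (dl y) x = \<gamma> (gd x y)" using span_le by blast
  have "r - r' = (r div mpoly) * mpoly" unfolding r'_def by (simp add: div_mult_mod_eq minus_mod_eq_mult_div)
  then have "\<forall>t\<in>{0..d}. poly (r - r') (\<theta> t) = 0" using poly_m by simp
  then have "ev (r - r') (dl y) x = 0" if "x \<in> V" for x y using vanish that by blast
  then have "ev r (dl y) x = ev r' (dl y) x" if "x \<in> V" for x y using that by (simp add: ev_diff)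
  then show ?thesis using g by auto
qed

lemma distreg: "distance_regular V E"
proof -
  have "\<forall>j. \<exists>\<gamma>. j \<le> d \<longrightarrow> (\<exists>a. rep j a \<and> (\<forall>x\<in>V. \<forall>u\<in>V. ev (pCons 0 a) (dl u) x = \<gamma> (gd x u)))"
  proof
    fix j
    show "\<exists>\<gamma>. j \<le> d \<longrightarrow> (\<exists>a. rep j a \<and> (\<forall>x\<in>V. \<forall>u\<in>V. ev (pCons 0 a) (dl u) x = \<gamma> (gd x u)))"
    proof (cases "j \<le> d")
      case True
      obtain a where a: "rep j a" using rep_ex[OF True] by blast
      obtain \<gamma> where "\<forall>x\<in>V. \<forall>u\<in>V. ev (pCons 0 a) (dl u) x = \<gamma> (gd x u)" using span_all by blast
      then show ?thesis using a by blast
    qed simp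
  qed
  then obtain \<Gamma> where G: "\<And>j. j \<le> d \<Longrightarrow> (\<exists>a. rep j a \<and> (\<forall>x\<in>V. \<forall>u\<in>V. ev (pCons 0 a) (dl u) x = \<Gamma> j (gd x u)))"
    by metis
  define p where "p i j = (if j \<le> d then nat \<lfloor>\<Gamma> j i\<rfloor> else 0)" for i j
  show ?thesis unfolding distance_regular_def
  proof (intro exI[of _ p] ballI allI)
    fix u x j assume u: "u \<in> V" and x: "x \<in> V"
    have set: "{y \<in> V. E x y \<and> gd u y = j} = {y \<in> Nb x. gd u y = j}" by (auto simp: Nb_def)
    have rc: "real (card {y \<in> V. E x y \<and> gd u y = j}) = (\<Sum>y\<in>Nb x. if gd u y = j then 1 else 0)"
    proof -
      have "real (card {y \<in> Nb x. gd u y = j}) = (\<Sum>y\<in>{y \<in> Nb x. gd u y = j}. 1)"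
        by (rule real_of_card)
      also have "\<dots> = (\<Sum>y\<in>Nb x. if gd u y = j then 1 else 0)"
        by (rule sum.inter_filter[OF finNb])
      finally show ?thesis unfolding set .
    qed
    show "card {y \<in> V. E x y \<and> gd u y = j} = p (gd u x) j"
    proof (cases "j \<le> d")
      case True
      obtain a where a: "rep j a" and ga: "\<forall>x\<in>V. \<forall>u\<in>V. ev (pCons 0 a) (dl u) x = \<Gamma> j (gd x u)"
        using G[OF True] by blast
      have "(\<Sum>y\<in>Nb x. if gd u y = j then 1 else 0) = (\<Sum>y\<in>Nb x. ev a (dl u) y)"
      proof (intro sum.cong refl)
        fix y assume "y \<in> Nb x"
        then have y: "y \<in> V" by (simp add: Nb_def)
        show "(if gd u y = j then 1 else 0) = ev a (dl u) y"
          using a y u gd_sym[OF y u] by (simp add: rep_def)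
      qed
      also have "\<dots> = ev (pCons 0 a) (dl u) x" by (simp add: ev_pCons Aop_def)
      also have "\<dots> = \<Gamma> j (gd u x)" using ga x u gd_sym[OF x u] by simp
      finally have "real (card {y \<in> V. E x y \<and> gd u y = j}) = \<Gamma> j (gd u x)" using rc by simp
      then have "nat \<lfloor>\<Gamma> j (gd u x)\<rfloor> = card {y \<in> V. E x y \<and> gd u y = j}"
        by (metis floor_of_nat nat_int)
      then show ?thesis unfolding p_def using True by simp
    next
      case False
      have "{y \<in> V. E x y \<and> gd u y = j} = {}" using gd_le_d[OF u] False by auto
      then have "card {y \<in> V. E x y \<and> gd u y = j} = 0" by (simp only: card.empty)
      then show ?thesis unfolding p_def using False by simp
    qed
  qed
qed

lemma antip: "equiv V {(x, y). x \<in> V \<and> y \<in> V \<and> (gd x y = 0 \<or> gd x y = diameter V E)}"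
proof (rule equivI)
  show "{(x, y). x \<in> V \<and> y \<in> V \<and> (gd x y = 0 \<or> gd x y = diameter V E)} \<subseteq> V \<times> V" by auto
  show "refl_on V {(x, y). x \<in> V \<and> y \<in> V \<and> (gd x y = 0 \<or> gd x y = diameter V E)}"
    unfolding refl_on_def by simp
  show "sym {(x, y). x \<in> V \<and> y \<in> V \<and> (gd x y = 0 \<or> gd x y = diameter V E)}"
    unfolding sym_def using gd_sym by auto
  show "trans {(x, y). x \<in> V \<and> y \<in> V \<and> (gd x y = 0 \<or> gd x y = diameter V E)}"
    unfolding trans_def
  proof (intro allI impI)
    fix x y z
    assume a: "(x, y) \<in> {(x, y). x \<in> V \<and> y \<in> V \<and> (gd x y = 0 \<or> gd x y = diameter V E)}"
      and b: "(y, z) \<in> {(x, y). x \<in> V \<and> y \<in> V \<and> (gd x y = 0 \<or> gd x y = diameter V E)}"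
    have xyz: "x \<in> V" "y \<in> V" "z \<in> V" using a b by auto
    consider "x = y" | "y = z" | "gd x y = d" "gd y z = d"
      using a b gd_zero_iff diam by auto
    then show "(x, z) \<in> {(x, y). x \<in> V \<and> y \<in> V \<and> (gd x y = 0 \<or> gd x y = diameter V E)}"
    proof cases
      case 1 then show ?thesis using b by simp
    next
      case 2 then show ?thesis using a by simp
    next
      case 3
      have "gd y x = d" using 3 gd_sym xyz by simp
      then have "x = z" using antipode_unique[OF xyz(2,1,3)] 3 by simp
      then show ?thesis using xyz by simp
    qed
  qed
qed

end

theorem corollary3p8:
  fixes V :: "'a set" and E :: "'a \<Rightarrow> 'a \<Rightarrow> bool"
    and n d :: nat and \<theta> :: "nat \<Rightarrow> real"
  assumes "simple_graph V E" and "connected_graph V E" and "regular_graph V E"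
    and "spectrally_extremal V E"
    and "card V = n" and "diameter V E = d"
    and "\<And>i j. i < j \<Longrightarrow> j \<le> d \<Longrightarrow> \<theta> j < \<theta> i"
    and "adj_eigenvalues V E = \<theta> ` {0..d}"
    and "\<forall>u\<in>V. eccentricity V E u = d"
    and "real n * (\<Prod>s\<in>{1..d}. 1 / (\<theta> 0 - \<theta> s)) =
         (\<Sum>r\<in>{0..d}. (-1) ^ r * (\<Prod>s\<in>{0..d} - {r}. 1 / (\<theta> r - \<theta> s)))"
  shows "antipodal_drg V E"
proof -
  obtain k where k: "\<forall>x\<in>V. card {y \<in> V. E x y} = k"
    using assms(3) unfolding regular_graph_def by blast
  interpret grph V E by unfold_locales (rule assms(1))
  interpret setting V E n d \<theta> k
  proof unfold_locales
    show "connected_graph V E" by (rule assms(2))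
    show "\<And>x. x \<in> V \<Longrightarrow> card (Nb x) = k" using k by (simp add: Nb_def)
  qed (use assms in auto)
  show ?thesis unfolding antipodal_drg_def using distreg antip by blast
qed

end
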